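(* Let $f\in\mathbb Z[x]$ with $3\nmid N_1(f)$, and for $i\geq1$ let $\omega_i=e^{2\pi i/3^i}$. (i) There exist $J\in\{0,1,2\}$, a sign $\pm$, and integers $A,b$ with $\pm\omega_1^Jf(\omega_1)=\delta+3A(\omega_1-1)+9b$, where $\delta=1,2,4$ according as $N_1(f)\equiv 1,4,7\pmod 9$; and then $\pm\omega_1^Jf(\omega_1)(1-\omega_1)=\delta(1-\omega_1)+9A+9B(1-\omega_1)$ with $B=b-A$. (ii) For every $i\geq 2$ there exist $h\in\mathbb Z[x]$ and $u(x)=\pm x^I(1+x)^J(x^4+1)^K$ with integers $I,J,K\geq 0$ (so $u(\omega_i)$ is a unit) such that $u(\omega_i)f(\omega_i)=1+(\omega_i-1)^5h(\omega_i)$. (iii) If in (ii) $3\mid h(1)$, then there exist $t\in\mathbb Z[x]$ and $u$ of the same form $\pm x^I(1+x)^J(x^4+1)^K$ with $u(\omega_i)f(\omega_i)=1+(\omega_i-1)^7t(\omega_i)$. (iv) If in (ii) $i=2$ and $3\nmid h(1)$, then for some $u$ of the form $\pm x^I(1+x)^J(x^4+1)^K$ and some $t\in\mathbb Z[x]$, $(1-\omega_2)u(\omega_2)f(\omega_2)=1-\omega_2+3\delta(\omega_2)+3(\omega_2-1)^2t(\omega_2)$ with $\delta(x)=x$ or $\delta(x)=-1$.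
   Context: $N_1(f)=f(\omega_1)f(\omega_1^2)$. *)

theory Defs
  imports "HOL-Analysis.Analysis" "HOL-Computational_Algebra.Polynomial"
begin

definition omega :: "nat \<Rightarrow> complex" where
  "omega i = exp (2 * of_real pi * \<i> / of_nat (3 ^ i))"

definition evc :: "int poly \<Rightarrow> complex \<Rightarrow> complex" where
  "evc p z = poly (map_poly of_int p) z"

definition N1 :: "int poly \<Rightarrow> complex" where
  "N1 f = evc f (omega 1) * evc f ((omega 1)^2)"

definition unit_form :: "int poly \<Rightarrow> bool" where
  "unit_form u \<longleftrightarrow> (\<exists>(s::int) I J K. s \<in> {1, -1} \<and>
      u = smult s (monom 1 I * [:1, 1:] ^ J * (monom 1 4 + 1) ^ K))"

end

theory Submission
  imports Defs
begin

lemma evc_pCons [simp]: "evc (pCons a p) z = of_int a + z * evc p z"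
  unfolding evc_def by (simp add: map_poly_pCons)
lemma evc_0 [simp]: "evc 0 z = 0" unfolding evc_def by simp
lemma evc_add [simp]: "evc (p + q) z = evc p z + evc q z"
proof (induction p arbitrary: q)
  case 0 then show ?case by simp
next
  case (pCons a p) then show ?case by (cases q) (simp_all add: algebra_simps)
qed
lemma evc_minus [simp]: "evc (- p) z = - evc p z"
  by (induction p) (simp_all add: algebra_simps)
lemma evc_diff [simp]: "evc (p - q) z = evc p z - evc q z"
  using evc_add[of p "-q" z] by simp
lemma evc_smult [simp]: "evc (smult c p) z = of_int c * evc p z"
  by (induction p) (simp_all add: algebra_simps)
lemma evc_mult [simp]: "evc (p * q) z = evc p z * evc q z"
  by (induction p) (simp_all add: algebra_simps)
lemma evc_1 [simp]: "evc 1 z = 1" by (simp add: one_pCons)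
lemma evc_power [simp]: "evc (p ^ n) z = evc p z ^ n"
  by (induction n) simp_all
lemma evc_monom [simp]: "evc (monom 1 n) z = z ^ n"
  unfolding evc_def by (simp add: map_poly_monom poly_monom)
lemma evc_const: "evc [:c:] z = of_int c" by simp

lemma poly_pCons_1: "poly (pCons a p) (1::int) = a + poly p 1" by simp

definition inR :: "complex \<Rightarrow> complex \<Rightarrow> bool" where
  "inR w z \<longleftrightarrow> (\<exists>p. z = evc p w)"
definition divL :: "complex \<Rightarrow> nat \<Rightarrow> complex \<Rightarrow> bool" where
  "divL w k z \<longleftrightarrow> (\<exists>y. inR w y \<and> z = (w - 1) ^ k * y)"

lemma inR_evc [intro]: "inR w (evc p w)" unfolding inR_def by blast
lemma inR_int [intro]: "inR w (of_int a)" using inR_evc[of w "[:a:]"] by simp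
lemma inR_0 [intro]: "inR w 0" using inR_int[of w 0] by simp
lemma inR_1 [intro]: "inR w 1" using inR_int[of w 1] by simp
lemma inR_numeral [intro]: "inR w (numeral n)" using inR_int[of w "numeral n"] by simp
lemma inR_w [intro]: "inR w w" using inR_evc[of w "monom 1 1"] by simp
lemma inR_add [intro]: "inR w x \<Longrightarrow> inR w y \<Longrightarrow> inR w (x + y)"
  unfolding inR_def by (metis evc_add)
lemma inR_mult [intro]: "inR w x \<Longrightarrow> inR w y \<Longrightarrow> inR w (x * y)"
  unfolding inR_def by (metis evc_mult)
lemma inR_uminus [intro]: "inR w x \<Longrightarrow> inR w (- x)"
  unfolding inR_def by (metis evc_minus)
lemma inR_diff [intro]: "inR w x \<Longrightarrow> inR w y \<Longrightarrow> inR w (x - y)"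
  unfolding inR_def by (metis evc_diff)
lemma inR_power [intro]: "inR w x \<Longrightarrow> inR w (x ^ n)"
  by (induction n) auto
lemma inR_evc_gen [intro]: "inR w x \<Longrightarrow> inR w (evc q x)"
  by (induction q) auto
lemma inR_geom [intro]: "inR w (sum ((^) w) {..<m})"
  by (induction m) auto

lemma divL_0 [intro, simp]: "divL w k 0" unfolding divL_def by auto
lemma divL_triv [intro]: "inR w y \<Longrightarrow> divL w k ((w - 1) ^ k * y)" unfolding divL_def by auto
lemma divL_R: "divL w 0 z \<longleftrightarrow> inR w z" unfolding divL_def by auto
lemma divL_inR: "divL w k z \<Longrightarrow> inR w z" unfolding divL_def by auto
lemma divL_add [intro]: "divL w k x \<Longrightarrow> divL w k y \<Longrightarrow> divL w k (x + y)"
  unfolding divL_def by (metis distrib_left inR_add)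
lemma divL_uminus [intro]: "divL w k x \<Longrightarrow> divL w k (- x)"
  unfolding divL_def by (metis mult_minus_right inR_uminus)
lemma divL_diff [intro]: "divL w k x \<Longrightarrow> divL w k y \<Longrightarrow> divL w k (x - y)"
  using divL_add[of w k x "-y"] divL_uminus[of w k y] by simp
lemma divL_multR [intro]: "inR w a \<Longrightarrow> divL w k x \<Longrightarrow> divL w k (a * x)"
  unfolding divL_def by (metis inR_mult mult.left_commute)
lemma divL_multR' [intro]: "inR w a \<Longrightarrow> divL w k x \<Longrightarrow> divL w k (x * a)"
  using divL_multR by (metis mult.commute)
lemma divL_mult: "divL w j x \<Longrightarrow> divL w k y \<Longrightarrow> divL w (j + k) (x * y)"
  unfolding divL_def
proof (elim exE conjE)
  fix a b assume "inR w a" "x = (w - 1) ^ j * a" "inR w b" "y = (w - 1) ^ k * b"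
  then show "\<exists>c. inR w c \<and> x * y = (w - 1) ^ (j + k) * c"
    by (intro exI[of _ "a * b"]) (auto simp: power_add algebra_simps)
qed
lemma divL_mono: "j \<le> k \<Longrightarrow> divL w k z \<Longrightarrow> divL w j z"
  unfolding divL_def
proof (elim exE conjE)
  fix a assume "j \<le> k" "inR w a" "z = (w - 1) ^ k * a"
  then show "\<exists>c. inR w c \<and> z = (w - 1) ^ j * c"
    by (intro exI[of _ "(w-1)^(k-j) * a"]) (auto simp: power_add[symmetric] mult.assoc)
qed
lemma divL_L [intro]: "divL w 1 (w - 1)" using divL_triv[of w 1 1] by auto
lemma divL_Lpow [intro]: "divL w k ((w - 1)^k)" using divL_triv[of w 1 k] by auto

lemma digit_poly: "divL w 1 (evc p w - of_int (poly p 1))"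
proof -
  have "p = [:-1, 1:] * synthetic_div p 1 + [:poly p 1:]"
    using synthetic_div_correct'[of 1 p] by simp
  then have "evc p w = evc ([:-1, 1:] * synthetic_div p 1 + [:poly p 1:]) w" by simp
  also have "\<dots> = (w - 1) * evc (synthetic_div p 1) w + of_int (poly p 1)"
    by (simp add: algebra_simps)
  finally show ?thesis using divL_triv[of w "evc (synthetic_div p 1) w" 1] by auto
qed
lemma digit: "inR w z \<Longrightarrow> \<exists>a. divL w 1 (z - of_int a)"
  unfolding inR_def using digit_poly by blast
lemma omega_pow: assumes "k \<le> i" shows "omega i ^ (3^(i-k)) = omega k"
proof -
  have e: "(3::nat)^i = 3^(i-k) * 3^k" using assms by (simp add: power_add[symmetric])
  have "omega i ^ (3^(i-k)) = exp (of_nat (3^(i-k)) * (2 * of_real pi * \<i> / of_nat (3 ^ i)))"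
    unfolding omega_def by (rule exp_of_nat_mult[symmetric])
  also have "of_nat (3^(i-k)) * (2 * of_real pi * \<i> / of_nat (3 ^ i)) = (2 * of_real pi * \<i> / of_nat (3 ^ k) :: complex)"
    unfolding e by (simp add: field_simps)
  finally show ?thesis unfolding omega_def .
qed

lemma omega1_eq: "omega 1 = Complex (-1/2) (sqrt 3 / 2)"
proof -
  have "omega 1 = exp (\<i> * complex_of_real (2*pi/3))"
    unfolding omega_def by (simp add: field_simps)
  also have "\<dots> = cis (2*pi/3)" by (simp add: cis_conv_exp)
  also have "\<dots> = Complex (-1/2) (sqrt 3 / 2)"
    by (simp add: complex_eq_iff cos_120 sin_120)
  finally show ?thesis .
qed

lemma rho_eq: "omega 1 ^ 2 + omega 1 + 1 = 0"
  unfolding omega1_eq by (simp add: complex_eq_iff power2_eq_square)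

lemma zeta_eq: "omega 2 ^ 6 + omega 2 ^ 3 + 1 = 0"
proof -
  have "omega 2 ^ 3 = omega 1" using omega_pow[of 1 2] by simp
  then have "omega 2 ^ 6 = omega 1 ^ 2" proof -
    have "omega 2 ^ 6 = (omega 2 ^ 3) ^ 2" by (simp flip: power_mult)
    then show ?thesis using \<open>omega 2 ^ 3 = omega 1\<close> by simp
  qed
  then show ?thesis using rho_eq \<open>omega 2 ^ 3 = omega 1\<close> by simp
qed

lemma three_id: fixes Z :: complex
  shows "3 - (Z - 1)^6 * (10 + 11*Z + 7*Z^2 + 10*Z^3 + 4*Z^4 - 4*Z^5)
     = (Z^6 + Z^3 + 1) * (-7 + 49*Z - 91*Z^2 + 74*Z^3 - 28*Z^4 + 4*Z^5)"
  by (simp add: algebra_simps power_def numeral_eq_Suc)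

lemma three_L6: assumes "2 \<le> i" shows "divL (omega i) 6 3"
proof -
  define w where "w = omega i"
  define m where "m = (3::nat)^(i-2)"
  define Z where "Z = w ^ m"
  have Z2: "Z = omega 2" unfolding Z_def w_def m_def using omega_pow[OF assms] .
  have "3 = (Z - 1)^6 * (10 + 11*Z + 7*Z^2 + 10*Z^3 + 4*Z^4 - 4*Z^5)"
    using three_id[of Z] zeta_eq unfolding Z2 by simp
  also have "Z - 1 = (w - 1) * sum ((^) w) {..<m}" unfolding Z_def by (rule power_diff_1_eq)
  finally have "3 = (w - 1)^6 * (sum ((^) w) {..<m} ^ 6 * (10 + 11*Z + 7*Z^2 + 10*Z^3 + 4*Z^4 - 4*Z^5))"
    by (simp add: power_mult_distrib mult.assoc)
  moreover have "inR w (sum ((^) w) {..<m} ^ 6 * (10 + 11*Z + 7*Z^2 + 10*Z^3 + 4*Z^4 - 4*Z^5))"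
    unfolding Z_def by (intro inR_mult inR_power inR_geom inR_add inR_diff inR_numeral inR_w)
  ultimately show ?thesis unfolding w_def[symmetric] by (metis divL_triv)
qed

lemma int3: assumes "divL w k 3" "3 dvd a" shows "divL w k (of_int a)"
proof -
  obtain c where "a = 3 * c" using assms(2) by blast
  then have "of_int a = of_int c * (3::complex)" by simp
  then show ?thesis using assms(1) divL_multR[of w "of_int c" k 3] by auto
qed
lemmas inR_I = inR_add inR_mult inR_diff inR_uminus inR_power inR_int inR_numeral inR_0 inR_1 inR_w inR_evc inR_geom
lemma cong_mult:
  assumes "1 \<le> k" "inR w x" "inR w y"
    and "divL w (k+1) (x - 1 - of_int \<alpha> * (w-1)^k)"
    and "divL w (k+1) (y - 1 - of_int \<beta> * (w-1)^k)"
  shows "divL w (k+1) (x*y - 1 - of_int (\<alpha>+\<beta>) * (w-1)^k)"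
proof -
  have eq: "x*y - 1 - of_int (\<alpha>+\<beta>) * (w-1)^k
     = (x - 1 - of_int \<alpha> * (w-1)^k) * y + (y - 1 - of_int \<beta> * (w-1)^k) * (1 + of_int \<alpha> * (w-1)^k)
       + of_int (\<alpha> * \<beta>) * ((w-1)^k * (w-1)^k)"
    by (simp add: algebra_simps)
  have pk: "(w-1)^k * (w-1)^k = (w-1)^(2*k)" by (simp add: power_add[symmetric] mult_2)
  have "divL w (2*k) ((w-1)^(2*k))" by (rule divL_Lpow)
  then have "divL w (k+1) ((w-1)^(2*k))" by (rule divL_mono[rotated]) (use assms(1) in simp)
  then have "divL w (k+1) (of_int (\<alpha> * \<beta>) * (w-1)^(2*k))" by (intro divL_multR) auto
  moreover have "divL w (k+1) ((x - 1 - of_int \<alpha> * (w-1)^k) * y)"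
    using assms by (intro divL_multR') auto
  moreover have "divL w (k+1) ((y - 1 - of_int \<beta> * (w-1)^k) * (1 + of_int \<alpha> * (w-1)^k))"
    using assms by (intro divL_multR' inR_I)
  ultimately show ?thesis unfolding eq pk by (intro divL_add)
qed

lemma cong_pow:
  assumes "1 \<le> k" "inR w x" "divL w (k+1) (x - 1 - of_int c * (w-1)^k)"
  shows "divL w (k+1) (x^j - 1 - of_int (int j * c) * (w-1)^k)"
proof (induction j)
  case 0 then show ?case by simp
next
  case (Suc j)
  have "divL w (k+1) (x * x^j - 1 - of_int (c + int j * c) * (w-1)^k)"
    by (rule cong_mult) (use assms Suc in auto)
  then show ?case by (simp add: algebra_simps)
qed

lemma kill:
  assumes "divL w 1 3" "3 dvd \<gamma>" "divL w (k+1) (z - 1 - of_int \<gamma> * (w-1)^k)"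
  shows "divL w (k+1) (z - 1)"
proof -
  have "divL w (1 + k) (of_int \<gamma> * (w-1)^k)"
    by (intro divL_mult int3 assms divL_Lpow)
  then have "divL w (k+1) ((z - 1 - of_int \<gamma> * (w-1)^k) + of_int \<gamma> * (w-1)^k)"
    using assms(3) by (intro divL_add) (auto simp: add.commute)
  then show ?thesis by simp
qed

lemma lift:
  assumes "divL w k (v - 1)"
  shows "\<exists>a. divL w (k+1) (v - 1 - of_int a * (w-1)^k)"
proof -
  obtain y where y: "inR w y" "v - 1 = (w-1)^k * y" using assms unfolding divL_def by blast
  obtain a where a: "divL w 1 (y - of_int a)" using digit[OF y(1)] by blast
  have "divL w (k + 1) ((w-1)^k * (y - of_int a))" by (intro divL_mult divL_Lpow a)
  moreover have "(w-1)^k * (y - of_int a) = v - 1 - of_int a * (w-1)^k" using y(2) by (simp add: algebra_simps)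
  ultimately show ?thesis by auto
qed

lemma choose_j:
  fixes c a :: int assumes "\<not> 3 dvd c"
  shows "\<exists>j::nat. j < 3 \<and> 3 dvd (int j * c + a)"
proof -
  have "3 dvd (0*c + a) \<or> 3 dvd (1*c+a) \<or> 3 dvd (2*c+a)" using assms by presburger
  then show ?thesis
  proof (elim disjE)
    assume "3 dvd (0*c + a)" then show ?thesis by (intro exI[of _ 0]) simp
  next
    assume "3 dvd (1*c + a)" then show ?thesis by (intro exI[of _ 1]) simp
  next
    assume "3 dvd (2*c + a)" then show ?thesis by (intro exI[of _ 2]) simp
  qed
qed
lemma unit_form_mult: assumes "unit_form p" "unit_form q" shows "unit_form (p * q)"
proof -
  obtain s I J K where p: "s \<in> {1,-1}" "p = smult s (monom 1 I * [:1, 1:] ^ J * (monom 1 4 + 1) ^ K)"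
    using assms(1) unfolding unit_form_def by blast
  obtain t I2 J2 K2 where q: "t \<in> {1,-1}" "q = smult t (monom 1 I2 * [:1, 1:] ^ J2 * (monom 1 4 + 1) ^ K2)"
    using assms(2) unfolding unit_form_def by blast
  have "s * t \<in> {1,-1}" using p(1) q(1) by auto
  moreover have "p * q = smult (s*t) (monom 1 (I+I2) * [:1, 1:] ^ (J+J2) * (monom 1 4 + 1) ^ (K+K2))"
  proof -
    have m: "monom (1::int) (I+I2) = monom 1 I * monom 1 I2" by (simp add: mult_monom)
    show ?thesis unfolding p(2) q(2) m by (simp add: power_add algebra_simps)
  qed
  ultimately show ?thesis unfolding unit_form_def by blast
qed

lemma unit_form_const: assumes "s \<in> {1,-1}" shows "unit_form [:s:]"
  unfolding unit_form_def using assms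
  by (intro exI[of _ s] exI[of _ 0]) (simp add: monom_0)

lemma unit_form_1: "unit_form 1"
  using unit_form_const[of 1] by (simp add: one_pCons)

lemma unit_form_power: "unit_form p \<Longrightarrow> unit_form (p ^ n)"
  by (induction n) (auto intro: unit_form_mult unit_form_1)

lemma step_poly:
  assumes "divL w 1 3" "1 \<le> k" "unit_form e"
    and "divL w (k+1) (evc e w - 1 - of_int c * (w-1)^k)" "\<not> 3 dvd c"
    and "unit_form u" "divL w k (evc u w * evc f w - 1)"
  shows "\<exists>u'. unit_form u' \<and> divL w (k+1) (evc u' w * evc f w - 1)"
proof -
  obtain a where a: "divL w (k+1) (evc u w * evc f w - 1 - of_int a * (w-1)^k)"
    using lift[OF assms(7)] by blast
  obtain j where j: "j < 3" "3 dvd (int j * c + a)" using choose_j[OF assms(5)] by blast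
  have ej: "divL w (k+1) (evc e w ^ j - 1 - of_int (int j * c) * (w-1)^k)"
    by (rule cong_pow) (use assms in auto)
  have "divL w (k+1) (evc e w ^ j * (evc u w * evc f w) - 1 - of_int (int j * c + a) * (w-1)^k)"
    by (rule cong_mult) (use assms ej a in \<open>auto intro!: inR_I\<close>)
  then have "divL w (k+1) (evc e w ^ j * (evc u w * evc f w) - 1)"
    by (rule kill[OF assms(1) j(2)])
  then have "divL w (k+1) (evc (e ^ j * u) w * evc f w - 1)" by (simp add: mult.assoc)
  moreover have "unit_form (e ^ j * u)" using assms by (intro unit_form_mult unit_form_power)
  ultimately show ?thesis by blast
qed
definition "e1 = (monom 1 1 :: int poly)"
definition "e2 = smult (-1) (monom 1 1 * [:1, 1:] :: int poly)"
definition "e3 = (monom 1 3 :: int poly)"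
definition "e4 = smult (-1) (monom 1 6 * [:1, 1:]^2 * (monom 1 4 + 1) :: int poly)"
definition "e6 = e2 ^ 3"

lemma uf_e1: "unit_form e1" unfolding unit_form_def e1_def
  by (intro exI[of _ 1] exI[of _ 1] exI[of _ 0]) simp
lemma uf_e2: "unit_form e2" unfolding unit_form_def e2_def
  by (intro exI[of _ "-1"] exI[of _ 1] exI[of _ 1] exI[of _ 0]) simp
lemma uf_e3: "unit_form e3" unfolding unit_form_def e3_def
  by (intro exI[of _ 1] exI[of _ 3] exI[of _ 0]) simp
lemma uf_e4: "unit_form e4" unfolding unit_form_def e4_def
  by (intro exI[of _ "-1"] exI[of _ 6] exI[of _ 2] exI[of _ 1]) simp
lemma uf_e6: "unit_form e6" unfolding e6_def by (intro unit_form_power uf_e2)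

lemma evc_e2: "evc e2 w = -(w * (1 + w))" unfolding e2_def by (simp add: algebra_simps)

lemma E1: "divL w 2 (evc e1 w - 1 - of_int 1 * (w-1)^1)"
  unfolding e1_def by simp

lemma E2: assumes "divL w 6 3" shows "divL w 3 (evc e2 w - 1 - of_int (-1) * (w-1)^2)"
proof -
  have eq: "evc e2 w - 1 - of_int (-1) * (w-1)^2 = (-w) * 3"
    unfolding evc_e2 by (simp add: algebra_simps power2_eq_square)
  have "divL w 3 3" using divL_mono[OF _ assms] by simp
  then show ?thesis unfolding eq by (intro divL_multR inR_I)
qed

lemma E3: assumes "divL w 6 3" shows "divL w 4 (evc e3 w - 1 - of_int 1 * (w-1)^3)"
proof -
  have eq: "evc e3 w - 1 - of_int 1 * (w-1)^3 = (w^2 - w) * 3"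
    unfolding e3_def by (simp add: algebra_simps power_def numeral_eq_Suc)
  have "divL w 4 3" using divL_mono[OF _ assms] by simp
  then show ?thesis unfolding eq by (intro divL_multR inR_I)
qed

lemma E4: assumes "divL w 6 3" shows "divL w 5 (evc e4 w - 1 - of_int 1 * (w-1)^4)"
proof -
  define L where "L = w - 1"
  have eq: "evc e4 w - 1 - of_int 1 * (w-1)^4 =
     (-3 - 24*L - 102*L^2 - 272*L^3 - 507*L^4) * 3 +
     L^5 * (-2072 - 2101*L - 1582*L^2 - 871*L^3 - 340*L^4 - 89*L^5 - 14*L^6 - L^7)"
    unfolding e4_def L_def by (simp add: algebra_simps power_def numeral_eq_Suc)
  have "divL w 5 3" using divL_mono[OF _ assms] by simp
  then show ?thesis unfolding eq L_def by (intro divL_add divL_multR divL_triv inR_I)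
qed

lemma E6: assumes "divL w 6 3" shows "divL w 7 (evc e6 w - 1 - of_int (-1) * (w-1)^6)"
proof -
  define L where "L = w - 1"
  have eq: "evc e6 w - 1 - of_int (-1) * (w-1)^6 =
     (-L + L^3 + 6*w*L - 3*w*L^3 - 9*w^2*L) * (3 * L) + (-w + 3*w^2 - 3*w^3) * (3 * 3)"
    unfolding e6_def evc_power evc_e2 L_def by (simp add: algebra_simps power_def numeral_eq_Suc)
  have a: "divL w (6+1) (3 * L)" unfolding L_def by (intro divL_mult assms divL_L)
  have "divL w (6+6) (3 * 3)" by (intro divL_mult assms)
  then have b: "divL w 7 (3 * 3)" by (rule divL_mono[rotated]) simp
  have "divL w 7 ((-L + L^3 + 6*w*L - 3*w*L^3 - 9*w^2*L) * (3 * L))"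
    by (rule divL_multR) (use a in \<open>auto simp: L_def intro!: inR_I\<close>)
  moreover have "divL w 7 ((-w + 3*w^2 - 3*w^3) * (3 * 3))"
    by (rule divL_multR) (use b in \<open>auto intro!: inR_I\<close>)
  ultimately show ?thesis unfolding eq by (rule divL_add)
qed
lemma ab_repr: "\<exists>a b. (\<forall>z. z^2+z+1 = 0 \<longrightarrow> evc f z = of_int a + of_int b * z) \<and> 3 dvd (poly f 1 - a - b)"
proof (induction f)
  case 0 then show ?case by (intro exI[of _ 0]) simp
next
  case (pCons c p)
  then obtain a b where ab: "\<forall>z. z^2+z+1 = 0 \<longrightarrow> evc p z = of_int a + of_int b * z"
    "3 dvd (poly p 1 - a - b)" by blast
  have "\<forall>z. z^2+z+1 = 0 \<longrightarrow> evc (pCons c p) z = of_int (c - b) + of_int (a - b) * z"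
  proof (intro allI impI)
    fix z :: complex assume z: "z^2+z+1 = 0"
    then have "z^2 = -1 - z" by (simp add: algebra_simps eq_neg_iff_add_eq_0)
    then have zz: "z * z = -1 - z" by (simp add: power2_eq_square)
    have "z * (of_int a + of_int b * z) = of_int a * z + of_int b * (z * z)"
      by (simp add: algebra_simps)
    also have "\<dots> = of_int a * z + of_int b * (-1 - z)" by (simp only: zz)
    finally have "z * (of_int a + of_int b * z) = of_int a * z + of_int b * (-1 - z)" .
    then show "evc (pCons c p) z = of_int (c - b) + of_int (a - b) * z"
      using ab(1) z by (simp add: algebra_simps)
  qed
  moreover have "3 dvd (poly (pCons c p) 1 - (c - b) - (a - b))"
  proof -
    have "poly (pCons c p) 1 - (c - b) - (a - b) = (poly p 1 - a - b) + 3 * b" by simp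
    then show ?thesis using ab(2) by (metis dvd_add dvd_triv_left)
  qed
  ultimately show ?case by blast
qed

lemma rho_cube: "omega 1 ^ 3 = 1"
proof -
  have "omega 1 ^ 3 - 1 = (omega 1 - 1) * (omega 1 ^ 2 + omega 1 + 1)"
    by (simp add: algebra_simps power2_eq_square power3_eq_cube)
  then show ?thesis using rho_eq by simp
qed

lemma rho2_root: "(omega 1 ^ 2)^2 + omega 1 ^ 2 + 1 = 0"
proof -
  have "(omega 1 ^ 2)^2 = omega 1 ^ 3 * omega 1" by (simp flip: power_mult power_Suc2)
  then show ?thesis using rho_cube rho_eq by (simp add: algebra_simps)
qed

fun rotx :: "nat \<Rightarrow> int \<Rightarrow> int \<Rightarrow> int" where
  "rotx 0 a b = a" | "rotx (Suc 0) a b = - b" | "rotx _ a b = b - a"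
fun roty :: "nat \<Rightarrow> int \<Rightarrow> int \<Rightarrow> int" where
  "roty 0 a b = b" | "roty (Suc 0) a b = a - b" | "roty _ a b = - a"

lemma rot_eval: assumes "J < 3"
  shows "omega 1 ^ J * (of_int a + of_int b * omega 1) = of_int (rotx J a b) + of_int (roty J a b) * omega 1"
proof -
  have r2: "omega 1 ^ 2 = -1 - omega 1" using rho_eq by (simp add: algebra_simps eq_neg_iff_add_eq_0)
  have "J = 0 \<or> J = 1 \<or> J = 2" using assms by auto
  then show ?thesis
  proof (elim disjE)
    assume J: "J = 1"
    have rr: "omega 1 * omega 1 = -1 - omega 1" using r2 by (simp add: power2_eq_square)
    have "omega 1 * (of_int a + of_int b * omega 1) = of_int a * omega 1 + of_int b * (omega 1 * omega 1)"
      by (simp add: algebra_simps)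
    also have "\<dots> = of_int a * omega 1 + of_int b * (-1 - omega 1)" by (simp only: rr)
    finally show ?thesis using J by (simp add: algebra_simps)
  next
    assume J: "J = 2"
    have "omega 1 ^ 2 * (of_int a + of_int b * omega 1) = of_int a * omega 1 ^ 2 + of_int b * omega 1 ^ 3"
      by (simp add: algebra_simps power2_eq_square power3_eq_cube)
    also have "\<dots> = of_int a * (-1 - omega 1) + of_int b" by (simp only: r2 rho_cube) simp
    finally show ?thesis using J by (simp add: algebra_simps numeral_2_eq_2)
  qed simp
qed

lemma rot_lin: "rotx J (a + 9*k) (b + 9*l) = rotx J a b + 9 * rotx J k l"
  "roty J (a + 9*k) (b + 9*l) = roty J a b + 9 * roty J k l"
proof -
  have "J = 0 \<or> J = Suc 0 \<or> (\<exists>m. J = Suc (Suc m))" by presburger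
  then show "rotx J (a + 9*k) (b + 9*l) = rotx J a b + 9 * rotx J k l"
    "roty J (a + 9*k) (b + 9*l) = roty J a b + 9 * roty J k l" by (auto simp: algebra_simps)
qed

lemma rot_2 [simp]: "rotx 2 a b = b - a" "roty 2 a b = - a" by (simp_all add: numeral_2_eq_2)
definition del :: "int \<Rightarrow> int" where "del r = (if r = 1 then 1 else if r = 4 then 2 else 4)"

definition Pp :: "int \<Rightarrow> int \<Rightarrow> bool" where
  "Pp a b \<longleftrightarrow> (\<not> 3 dvd (a^2-a*b+b^2) \<longrightarrow> ((a^2-a*b+b^2) mod 9 \<in> {1,4,7} \<and>
     (\<exists>J\<in>{0,1,2}. \<exists>s\<in>{1,-1}. 3 dvd s * roty J a b \<and>
        9 dvd (s * rotx J a b + s * roty J a b - del ((a^2-a*b+b^2) mod 9)))))"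

lemma set08: "{0..8::int} = {0,1,2,3,4,5,6,7,8}" by auto
lemma fin: "\<forall>a\<in>{0..8}. \<forall>b\<in>{0..8}. Pp a b"
  unfolding set08 by (simp add: Pp_def del_def)
lemma Pp_all: "Pp a b"
proof -
  define a0 k b0 l where "a0 = a mod 9" "k = a div 9" "b0 = b mod 9" "l = b div 9"
  have a: "a = a0 + 9*k" and b: "b = b0 + 9*l" unfolding a0_k_b0_l_def by simp_all
  have "a0 \<in> {0..8}" "b0 \<in> {0..8}" unfolding a0_k_b0_l_def by auto
  then have P0: "Pp a0 b0" using fin by blast
  have Neq: "(a0+9*k)^2 - (a0+9*k)*(b0+9*l) + (b0+9*l)^2 = (a0^2 - a0*b0 + b0^2) + 9*(2*a0*k + 9*k^2 - a0*l - k*b0 - 9*k*l + 2*b0*l + 9*l^2)"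
    by (simp add: algebra_simps power2_eq_square)
  have L1: "3 dvd (N + 9*M) \<longleftrightarrow> 3 dvd N" for N M :: int
  proof -
    have "(3::int) dvd 9*M" by (rule dvd_mult2) simp
    then show ?thesis by (rule dvd_add_left_iff)
  qed
  have L2: "\<And>N M::int. (N + 9*M) mod 9 = N mod 9" by simp
  have L3: "3 dvd (s * (y + 9*Y)) \<longleftrightarrow> 3 dvd (s*y)" for s y Y :: int
  proof -
    have "s * (y + 9*Y) = s*y + 9*(s*Y)" by (simp add: algebra_simps)
    then show ?thesis using L1 by simp
  qed
  have L4: "\<And>s x X y Y d::int. 9 dvd (s*(x + 9*X) + s*(y + 9*Y) - d) \<longleftrightarrow> 9 dvd (s*x + s*y - d)"
  proof -
    fix s x X y Y d :: int
    have "s*(x + 9*X) + s*(y + 9*Y) - d = (s*x + s*y - d) + 9*(s*X + s*Y)" by (simp add: algebra_simps)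
    moreover have "(9::int) dvd 9*(s*X + s*Y)" by simp
    ultimately show "9 dvd (s*(x + 9*X) + s*(y + 9*Y) - d) \<longleftrightarrow> 9 dvd (s*x + s*y - d)"
      using dvd_add_left_iff by metis
  qed
  have "Pp (a0 + 9*k) (b0 + 9*l) = Pp a0 b0"
    unfolding Pp_def by (simp only: Neq rot_lin L1 L2 L3 L4)
  then show ?thesis using P0 a b by simp
qed
lemma part1:
  fixes f :: "int poly" and n :: int
  assumes hN: "N1 f = of_int n" and h3: "\<not> (3 dvd n)"
  shows "\<exists>(\<delta>::int) (J::nat) (s::int) (A::int) (b::int).
        n mod 9 \<in> {1, 4, 7} \<and>
        (n mod 9 = 1 \<longrightarrow> \<delta> = 1) \<and> (n mod 9 = 4 \<longrightarrow> \<delta> = 2) \<and> (n mod 9 = 7 \<longrightarrow> \<delta> = 4) \<and>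
        J \<in> {0, 1, 2} \<and> s \<in> {1, -1} \<and>
        of_int s * (omega 1) ^ J * evc f (omega 1)
          = of_int \<delta> + 3 * of_int A * (omega 1 - 1) + 9 * of_int b \<and>
        of_int s * (omega 1) ^ J * evc f (omega 1) * (1 - omega 1)
          = of_int \<delta> * (1 - omega 1) + 9 * of_int A + 9 * of_int (b - A) * (1 - omega 1)"
    and "\<not> 3 dvd poly f 1"
proof -
  define \<rho> where "\<rho> = omega 1"
  obtain a b where ab: "\<forall>z. z^2+z+1 = 0 \<longrightarrow> evc f z = of_int a + of_int b * z"
    "3 dvd (poly f 1 - a - b)" using ab_repr by blast
  have fa: "evc f \<rho> = of_int a + of_int b * \<rho>" using ab(1) rho_eq unfolding \<rho>_def by blast
  have fa2: "evc f (\<rho>^2) = of_int a + of_int b * \<rho>^2" using ab(1) rho2_root unfolding \<rho>_def by blast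
  have r3: "\<rho>^3 = 1" and r: "\<rho>^2 + \<rho> + 1 = 0" using rho_cube rho_eq unfolding \<rho>_def by auto
  have "(of_int a + of_int b * \<rho>) * (of_int a + of_int b * \<rho>^2)
      = of_int a ^ 2 + of_int a * of_int b * (\<rho>^2 + \<rho> + 1) - of_int a * of_int b + of_int b ^ 2 * \<rho>^3"
    by (simp add: algebra_simps power2_eq_square power3_eq_cube)
  also have "\<dots> = of_int (a^2 - a*b + b^2)" using r r3 by simp
  finally have "N1 f = of_int (a^2 - a*b + b^2)"
    unfolding N1_def using fa fa2 unfolding \<rho>_def by simp
  then have n: "n = a^2 - a*b + b^2" using hN by (metis of_int_eq_iff)
  show "\<not> 3 dvd poly f 1"
  proof
    assume "3 dvd poly f 1"
    moreover have "a + b = poly f 1 - (poly f 1 - a - b)" by simp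
    ultimately have "3 dvd a + b" using ab(2) by (metis dvd_diff)
    then obtain c where "a + b = 3 * c" by blast
    moreover have "n = (a+b)^2 - 3*a*b" unfolding n by (simp add: power2_eq_square algebra_simps)
    ultimately have "n = 3 * (3*c^2 - a*b)" by (simp add: power2_eq_square algebra_simps)
    then show False using h3 by simp
  qed
  have P: "Pp a b" by (rule Pp_all)
  then obtain J s where J: "J \<in> {0,1,2}" and s: "s \<in> {1,-1}" and m9: "n mod 9 \<in> {1,4,7}"
    and dy: "3 dvd s * roty J a b"
    and dx: "9 dvd (s * rotx J a b + s * roty J a b - del (n mod 9))"
    using h3 unfolding Pp_def n by blast
  define \<delta> where "\<delta> = del (n mod 9)"
  obtain A where A: "s * roty J a b = 3 * A" using dy by blast
  obtain B where B: "s * rotx J a b + s * roty J a b - \<delta> = 9 * B" using dx unfolding \<delta>_def by blast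
  have X: "s * rotx J a b = \<delta> + 9 * B - 3 * A" using A B by simp
  have J3: "J < 3" using J by auto
  have RE: "\<rho> ^ J * evc f \<rho> = of_int (rotx J a b) + of_int (roty J a b) * \<rho>"
    using rot_eval[OF J3, of a b] unfolding fa \<rho>_def[symmetric] .
  have "of_int s * \<rho> ^ J * evc f \<rho> = of_int s * (of_int (rotx J a b) + of_int (roty J a b) * \<rho>)"
    using RE by (simp add: mult.assoc)
  also have "\<dots> = of_int (s * rotx J a b) + of_int (s * roty J a b) * \<rho>" by (simp add: algebra_simps)
  also have "\<dots> = of_int \<delta> + 3 * of_int A * (\<rho> - 1) + 9 * of_int B" unfolding X A
    by (simp add: algebra_simps)
  finally have eq1: "of_int s * \<rho> ^ J * evc f \<rho> = of_int \<delta> + 3 * of_int A * (\<rho> - 1) + 9 * of_int B" .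
  have "(of_int \<delta> + 3 * of_int A * (\<rho> - 1) + 9 * of_int B) * (1 - \<rho>)
     = of_int \<delta> * (1 - \<rho>) + 9 * of_int A + 9 * of_int (B - A) * (1 - \<rho>) - 3 * of_int A * (\<rho>^2 + \<rho> + 1)"
    by (simp add: algebra_simps power2_eq_square)
  then have eq2: "of_int s * \<rho> ^ J * evc f \<rho> * (1 - \<rho>) = of_int \<delta> * (1 - \<rho>) + 9 * of_int A + 9 * of_int (B - A) * (1 - \<rho>)"
    using eq1 r by simp
  have "(n mod 9 = 1 \<longrightarrow> \<delta> = 1) \<and> (n mod 9 = 4 \<longrightarrow> \<delta> = 2) \<and> (n mod 9 = 7 \<longrightarrow> \<delta> = 4)"
    unfolding \<delta>_def del_def by simp
  then show "\<exists>(\<delta>::int) (J::nat) (s::int) (A::int) (b::int).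
        n mod 9 \<in> {1, 4, 7} \<and>
        (n mod 9 = 1 \<longrightarrow> \<delta> = 1) \<and> (n mod 9 = 4 \<longrightarrow> \<delta> = 2) \<and> (n mod 9 = 7 \<longrightarrow> \<delta> = 4) \<and>
        J \<in> {0, 1, 2} \<and> s \<in> {1, -1} \<and>
        of_int s * (omega 1) ^ J * evc f (omega 1)
          = of_int \<delta> + 3 * of_int A * (omega 1 - 1) + 9 * of_int b \<and>
        of_int s * (omega 1) ^ J * evc f (omega 1) * (1 - omega 1)
          = of_int \<delta> * (1 - omega 1) + 9 * of_int A + 9 * of_int (b - A) * (1 - omega 1)"
    using m9 J s eq1 eq2 unfolding \<rho>_def by blast
qed
lemma step_k:
  assumes "divL w 1 3" "1 \<le> k" "unit_form e"
    and "divL w (k+1) (evc e w - 1 - of_int c * (w-1)^k)" "\<not> 3 dvd c"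
    and "\<exists>u. unit_form u \<and> divL w k (evc u w * evc f w - 1)"
  shows "\<exists>u'. unit_form u' \<and> divL w (k+1) (evc u' w * evc f w - 1)"
  using assms step_poly by blast

lemma part2:
  assumes i: "2 \<le> i" and f1: "\<not> 3 dvd poly f 1"
  shows "\<exists>h u. unit_form u \<and> evc u (omega i) * evc f (omega i) = 1 + (omega i - 1) ^ 5 * evc h (omega i)"
proof -
  define w where "w = omega i"
  have T: "divL w 6 3" unfolding w_def using three_L6[OF i] .
  have T1: "divL w 1 3" using divL_mono[OF _ T] by simp
  define s0 :: int where "s0 = (if poly f 1 mod 3 = 1 then 1 else -1)"
  have uf0: "unit_form [:s0:]" unfolding s0_def by (intro unit_form_const) auto
  have d3: "3 dvd (s0 * poly f 1 - 1)" unfolding s0_def using f1 by presburger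
  have "evc [:s0:] w * evc f w - 1 = of_int s0 * (evc f w - of_int (poly f 1)) + of_int (s0 * poly f 1 - 1)"
    by (simp add: algebra_simps)
  moreover have "divL w 1 (of_int s0 * (evc f w - of_int (poly f 1)))"
    by (intro divL_multR digit_poly inR_int)
  moreover have "divL w 1 (of_int (s0 * poly f 1 - 1))" by (rule int3[OF T1 d3])
  ultimately have "divL w 1 (evc [:s0:] w * evc f w - 1)" by (metis divL_add)
  then have S1: "\<exists>u. unit_form u \<and> divL w 1 (evc u w * evc f w - 1)" using uf0 by blast
  have S2: "\<exists>u. unit_form u \<and> divL w 2 (evc u w * evc f w - 1)"
    using step_k[OF T1 _ uf_e1 _ _ S1, of 1] E1[of w] by (simp add: numeral_2_eq_2)
  have S3: "\<exists>u. unit_form u \<and> divL w 3 (evc u w * evc f w - 1)"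
    using step_k[OF T1 _ uf_e2 _ _ S2, of "-1"] E2[OF T] by simp
  have S4: "\<exists>u. unit_form u \<and> divL w 4 (evc u w * evc f w - 1)"
    using step_k[OF T1 _ uf_e3 _ _ S3, of 1] E3[OF T] by simp
  have S5: "\<exists>u. unit_form u \<and> divL w 5 (evc u w * evc f w - 1)"
    using step_k[OF T1 _ uf_e4 _ _ S4, of 1] E4[OF T] by simp
  then obtain u y where "unit_form u" "inR w y" "evc u w * evc f w - 1 = (w - 1)^5 * y"
    unfolding divL_def by blast
  moreover obtain h where "y = evc h w" using \<open>inR w y\<close> unfolding inR_def by blast
  ultimately show ?thesis unfolding w_def[symmetric] by (intro exI[of _ h] exI[of _ u]) (simp add: algebra_simps)
qed

lemma part3:
  assumes i: "2 \<le> i" and u: "unit_form u"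
    and eq: "evc u (omega i) * evc f (omega i) = 1 + (omega i - 1) ^ 5 * evc h (omega i)"
    and h1: "3 dvd poly h 1"
  shows "\<exists>t u'. unit_form u' \<and> evc u' (omega i) * evc f (omega i) = 1 + (omega i - 1) ^ 7 * evc t (omega i)"
proof -
  define w where "w = omega i"
  have T: "divL w 6 3" unfolding w_def using three_L6[OF i] .
  have T1: "divL w 1 3" using divL_mono[OF _ T] by simp
  have "evc u w * evc f w - 1 = (w-1)^5 * (evc h w - of_int (poly h 1)) + (w-1)^5 * of_int (poly h 1)"
    using eq unfolding w_def[symmetric] by (simp add: algebra_simps)
  moreover have "divL w (5+1) ((w-1)^5 * (evc h w - of_int (poly h 1)))"
    by (intro divL_mult divL_Lpow digit_poly)
  moreover have "divL w 6 ((w-1)^5 * of_int (poly h 1))"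
    by (intro divL_multR int3[OF T h1] inR_I)
  ultimately have "divL w 6 (evc u w * evc f w - 1)" by (simp add: divL_add)
  then have S6: "\<exists>u. unit_form u \<and> divL w 6 (evc u w * evc f w - 1)" using u by blast
  have "\<exists>u. unit_form u \<and> divL w 7 (evc u w * evc f w - 1)"
    using step_k[OF T1 _ uf_e6 _ _ S6, of "-1"] E6[OF T] by simp
  then obtain u' y where "unit_form u'" "inR w y" "evc u' w * evc f w - 1 = (w - 1)^7 * y"
    unfolding divL_def by blast
  moreover obtain t where "y = evc t w" using \<open>inR w y\<close> unfolding inR_def by blast
  ultimately show ?thesis unfolding w_def[symmetric] by (intro exI[of _ t] exI[of _ u']) (simp add: algebra_simps)
qed
lemma inR_nat [intro]: "inR w (of_nat n)" using inR_int[of w "int n"] by simp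

lemma part4:
  assumes u: "unit_form u"
    and eq: "evc u (omega 2) * evc f (omega 2) = 1 + (omega 2 - 1) ^ 5 * evc h (omega 2)"
    and h1: "\<not> 3 dvd poly h 1"
  shows "\<exists>u' t d. unit_form u' \<and> d \<in> {[:0, 1:], [:-1:]} \<and>
           (1 - omega 2) * evc u' (omega 2) * evc f (omega 2)
             = 1 - omega 2 + 3 * evc d (omega 2) + 3 * (omega 2 - 1) ^ 2 * evc t (omega 2)"
proof -
  define w where "w = omega 2"
  define L where "L = w - 1"
  have T: "divL w 6 3" unfolding w_def using three_L6 by simp
  have T1: "divL w 1 3" using divL_mono[OF _ T] by simp
  define \<eta>p :: "int poly" where "\<eta>p = [:0, -2, 5, -7, 5, -2:]"
  define \<eta> where "\<eta> = evc \<eta>p w"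
  have \<eta>1: "poly \<eta>p 1 = -1" unfolding \<eta>p_def by simp
  have L6: "L^6 = 3 * \<eta>"
  proof -
    have "L^6 = (w^6 + w^3 + 1) + 3 * \<eta>"
      unfolding L_def \<eta>_def \<eta>p_def by (simp add: algebra_simps power_def numeral_eq_Suc)
    then show ?thesis using zeta_eq unfolding w_def by simp
  qed
  define g0 where "g0 = evc h w"
  define d :: "int poly" where "d = (if poly h 1 mod 3 = 1 then [:0, 1:] else [:-1:])"
  have dset: "d \<in> {[:0, 1:], [:-1:]}" unfolding d_def by simp
  have dd: "3 dvd (poly h 1 - poly d 1)" unfolding d_def using h1 by simp presburger
  define Pp0 where "Pp0 = - (\<eta>p * h) - d"
  have "poly Pp0 1 = poly h 1 - poly d 1" unfolding Pp0_def using \<eta>1 by simp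
  then have "divL w 1 (of_int (poly Pp0 1))" using int3[OF T1 dd] by simp
  then have "divL w 1 ((evc Pp0 w - of_int (poly Pp0 1)) + of_int (poly Pp0 1))"
    by (intro divL_add digit_poly)
  then have "divL w 1 (- \<eta> * g0 - evc d w)" unfolding Pp0_def \<eta>_def g0_def by simp
  then obtain y where y: "inR w y" "- \<eta> * g0 - evc d w = L * y" unfolding divL_def L_def by auto
  obtain c' where "divL w 1 (y - of_int c')" using digit[OF y(1)] by blast
  then obtain y3 where y3: "inR w y3" "y - of_int c' = L * y3" unfolding divL_def L_def by auto
  define j where "j = nat (c' mod 3)"
  have "int j = c' mod 3" unfolding j_def by simp
  then obtain m where m: "c' = int j + 3 * m" by (metis add.commute mod_div_mult_eq mult.commute)
  have "divL w (6+1) (evc e6 w ^ j - 1 - of_int (int j * -1) * (w-1)^6)"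
    by (rule cong_pow) (use E6[OF T] in auto)
  then obtain r where r: "inR w r" "evc e6 w ^ j - 1 - of_int (int j * -1) * (w-1)^6 = L^7 * r"
    unfolding divL_def L_def by auto
  obtain \<eta>' where "divL w 1 (\<eta> - of_int (-1))" using digit_poly[of w \<eta>p] \<eta>1 unfolding \<eta>_def by simp
  then obtain \<eta>' where e': "inR w \<eta>'" "\<eta> + 1 = L * \<eta>'" unfolding divL_def L_def by auto
  obtain q where q: "inR w q" "3 = L^6 * q" using T unfolding divL_def L_def by auto
  define s where "s = r - of_nat j * L^4 * g0 + L^5 * r * g0"
  define g where "g = g0 - of_nat j * L + L^2 * s"
  define tc where "tc = y3 + \<eta>' * of_nat j - \<eta> * s + L^5 * q * of_int m"
  define u' where "u' = e6 ^ j * u"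
  have uf': "unit_form u'" unfolding u'_def by (intro unit_form_mult unit_form_power uf_e6 u)
  have E: "evc e6 w ^ j = 1 - of_nat j * L^6 + L^7 * r" using r(2) unfolding L_def by (simp add: algebra_simps)
  have eq': "evc u w * evc f w = 1 + L^5 * g0" using eq unfolding g0_def L_def w_def .
  have U: "evc u' w * evc f w = 1 + L^5 * g"
  proof -
    have "evc u' w * evc f w = evc e6 w ^ j * (evc u w * evc f w)" unfolding u'_def by (simp add: mult.assoc)
    also have "\<dots> = (1 - of_nat j * L^6 + L^7 * r) * (1 + L^5 * g0)" unfolding E eq' ..
    also have "\<dots> = 1 + L^5 * g" unfolding g_def s_def by (simp add: algebra_simps power_def numeral_eq_Suc)
    finally show ?thesis .
  qed
  have dw: "evc d w = - \<eta> * g0 - L * y" using y(2) by (simp add: eq_diff_eq diff_eq_eq add.commute)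
  have yy: "y = of_int c' + L * y3" using y3(2) by (simp add: eq_diff_eq diff_eq_eq add.commute)
  have ee: "\<eta> = L * \<eta>' - 1" using e'(2) by (simp add: eq_diff_eq diff_eq_eq add.commute)
  have cc: "(of_int c' :: complex) = of_nat j + L^6 * q * of_int m" using m q(2)
    by (metis (no_types) of_int_add of_int_mult of_int_of_nat_eq of_int_numeral mult.assoc)
  have Tq: "- \<eta> * g - evc d w = L^2 * tc"
    unfolding dw g_def tc_def yy cc
    by (simp add: ee algebra_simps power_def numeral_eq_Suc)
  have tcR: "inR w tc" unfolding tc_def \<eta>_def s_def g0_def
    using y3(1) e'(1) q(1) r(1) unfolding L_def by (intro inR_I inR_evc inR_nat) auto
  then obtain t where t: "tc = evc t w" unfolding inR_def by blast
  have "(1 - w) * evc u' w * evc f w = - L * (evc u' w * evc f w)" unfolding L_def by (simp add: algebra_simps)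
  also have "\<dots> = - L - L^6 * g" unfolding U by (simp add: algebra_simps power_def numeral_eq_Suc)
  also have "\<dots> = - L - 3 * \<eta> * g" unfolding L6 by simp
  also have "\<dots> = 1 - w + 3 * evc d w + 3 * (w - 1)^2 * tc"
  proof -
    have D: "evc d w = - \<eta> * g - L^2 * tc" using Tq by (simp add: eq_diff_eq diff_eq_eq add.commute)
    show ?thesis by (simp only: D) (simp add: L_def algebra_simps)
  qed
  finally show ?thesis using uf' dset t unfolding w_def by blast
qed

theorem lemma4p1:
  fixes f :: "int poly" and n :: int
  assumes hN: "N1 f = of_int n"
    and h3: "\<not> (3 dvd n)"
  shows
    "(\<exists>(\<delta>::int) (J::nat) (s::int) (A::int) (b::int).
        n mod 9 \<in> {1, 4, 7} \<and>
        (n mod 9 = 1 \<longrightarrow> \<delta> = 1) \<and> (n mod 9 = 4 \<longrightarrow> \<delta> = 2) \<and> (n mod 9 = 7 \<longrightarrow> \<delta> = 4) \<and>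
        J \<in> {0, 1, 2} \<and> s \<in> {1, -1} \<and>
        of_int s * (omega 1) ^ J * evc f (omega 1)
          = of_int \<delta> + 3 * of_int A * (omega 1 - 1) + 9 * of_int b \<and>
        of_int s * (omega 1) ^ J * evc f (omega 1) * (1 - omega 1)
          = of_int \<delta> * (1 - omega 1) + 9 * of_int A + 9 * of_int (b - A) * (1 - omega 1))
   \<and> (\<forall>i\<ge>2. \<exists>h u. unit_form u \<and>
        evc u (omega i) * evc f (omega i) = 1 + (omega i - 1) ^ 5 * evc h (omega i))
   \<and> (\<forall>i\<ge>2. \<forall>h u. unit_form u \<and>
        evc u (omega i) * evc f (omega i) = 1 + (omega i - 1) ^ 5 * evc h (omega i) \<and>
        3 dvd poly h 1 \<longrightarrow>
        (\<exists>t u'. unit_form u' \<and>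
           evc u' (omega i) * evc f (omega i) = 1 + (omega i - 1) ^ 7 * evc t (omega i)))
   \<and> (\<forall>h u. unit_form u \<and>
        evc u (omega 2) * evc f (omega 2) = 1 + (omega 2 - 1) ^ 5 * evc h (omega 2) \<and>
        \<not> (3 dvd poly h 1) \<longrightarrow>
        (\<exists>u' t d. unit_form u' \<and> d \<in> {[:0, 1:], [:-1:]} \<and>
           (1 - omega 2) * evc u' (omega 2) * evc f (omega 2)
             = 1 - omega 2 + 3 * evc d (omega 2) + 3 * (omega 2 - 1) ^ 2 * evc t (omega 2)))"
proof -
  have f1: "\<not> 3 dvd poly f 1" by (rule part1(2)[OF hN h3])
  show ?thesis
  proof (intro conjI allI impI)
    show "\<exists>(\<delta>::int) (J::nat) (s::int) (A::int) (b::int).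
        n mod 9 \<in> {1, 4, 7} \<and>
        (n mod 9 = 1 \<longrightarrow> \<delta> = 1) \<and> (n mod 9 = 4 \<longrightarrow> \<delta> = 2) \<and> (n mod 9 = 7 \<longrightarrow> \<delta> = 4) \<and>
        J \<in> {0, 1, 2} \<and> s \<in> {1, -1} \<and>
        of_int s * (omega 1) ^ J * evc f (omega 1)
          = of_int \<delta> + 3 * of_int A * (omega 1 - 1) + 9 * of_int b \<and>
        of_int s * (omega 1) ^ J * evc f (omega 1) * (1 - omega 1)
          = of_int \<delta> * (1 - omega 1) + 9 * of_int A + 9 * of_int (b - A) * (1 - omega 1)"
      by (rule part1(1)[OF hN h3])
  next
    fix i :: nat assume "2 \<le> i"
    then show "\<exists>h u. unit_form u \<and>
        evc u (omega i) * evc f (omega i) = 1 + (omega i - 1) ^ 5 * evc h (omega i)"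
      using part2 f1 by blast
  next
    fix i :: nat and h u
    assume "2 \<le> i" and H: "unit_form u \<and>
        evc u (omega i) * evc f (omega i) = 1 + (omega i - 1) ^ 5 * evc h (omega i) \<and>
        3 dvd poly h 1"
    then show "\<exists>t u'. unit_form u' \<and>
           evc u' (omega i) * evc f (omega i) = 1 + (omega i - 1) ^ 7 * evc t (omega i)"
      using part3 by blast
  next
    fix h u
    assume H: "unit_form u \<and>
        evc u (omega 2) * evc f (omega 2) = 1 + (omega 2 - 1) ^ 5 * evc h (omega 2) \<and>
        \<not> (3 dvd poly h 1)"
    then show "\<exists>u' t d. unit_form u' \<and> d \<in> {[:0, 1:], [:-1:]} \<and>
           (1 - omega 2) * evc u' (omega 2) * evc f (omega 2)
             = 1 - omega 2 + 3 * evc d (omega 2) + 3 * (omega 2 - 1) ^ 2 * evc t (omega 2)"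
      using part4 by blast
  qed
qed

end
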